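(* Let $\{(g^\omega,p^\omega):\omega\in\Omega\}$ be a family of mechanisms such that for all $\omega$ and all inputs, $g^\omega_{ij}\in[0,1]$, $\sum_i g^\omega_{ij}\le1$, $p^\omega_i\ge0$ and $p^\omega_i(b,x,y)\le\sum_j g^\omega_{ij}(b,x,y)b_{ij}$; let $\mathcal U$ and $\mathcal P$ be the induced utility and payment classes. Assume every bidder's valuation satisfies $v_i(S)=\sum_{j\in S}v_{ij}\le1$ for all $S\subseteq[m]$. Let $(v^{(l)},x^{(l)},y^{(l)})$, $l=1,\dots,L$, be i.i.d. samples from the distribution $\mathbb P$ of $(v,x,y)$. Let $\delta\in(0,1)$ and let $\epsilon>0$ satisfy $$\epsilon\ge\sqrt{\frac{9n^2}{2L}\Big(\log\frac4\delta+\max\Big\{\log\mathcal N_{\infty,1}\big(\mathcal P,\tfrac\epsilon3\big),\log\mathcal N_{\infty,1}\big(\mathcal U,\tfrac\epsilon6\big)\Big\}\Big)}.$$ Then with probability at least $1-\delta$, simultaneously for all $\omega\in\Omega$, $$\Big|\mathbb E\Big[\sum_{i=1}^np_i^\omega(v,x,y)\Big]-\frac1L\sum_{l=1}^L\sum_{i=1}^np_i^\omega(v^{(l)},x^{(l)},y^{(l)})\Big|\le\epsilon$$ and $$\Big|\mathbb E\Big[\sum_{i=1}^n reg_i^\omega(v,x,y)\Big]-\sum_{i=1}^n\widehat{reg}_i(\omega)\Big|\le\epsilon .$$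
   Context: Setup: $n$ bidders, $m$ items, bidder contexts $x\in\mathcal X^n$, item contexts $y\in\mathcal Y^m$, valuation/bid matrices $v\in\mathcal V^{n\times m}$, $\mathcal V\subseteq\mathbb R_{\ge0}$; $(v_i',v_{-i})$ is $v$ with row $i$ replaced by $v_i'$. A mechanism $(g^\omega,p^\omega)$ has $g^\omega:\mathcal V^{n\times m}\times\mathcal X^n\times\mathcal Y^m\to\mathbb R^{n\times m}$ and $p^\omega:\mathcal V^{n\times m}\times\mathcal X^n\times\mathcal Y^m\to\mathbb R^n$; utility $u^\omega_i(v_i,b,x,y)=\sum_jg^\omega_{ij}(b,x,y)v_{ij}-p^\omega_i(b,x,y)$; ex-post regret $reg^\omega_i(v,x,y)=\max_{b_i'\in\mathcal V^m}u^\omega_i(v_i,(b_i',v_{-i}),x,y)-u^\omega_i(v_i,v,x,y)$; empirical regret $\widehat{reg}_i(\omega)=\frac1L\sum_{l=1}^L reg_i^\omega(v^{(l)},x^{(l)},y^{(l)})$. $\mathcal U=\{u^\omega:\omega\in\Omega\}$, $\mathcal P=\{p^\omega:\omega\in\Omega\}$. Distances: $l_{\infty,1}(p,p')=\sup_{(v,x,y)}\sum_i|p_i(v,x,y)-p'_i(v,x,y)|$, $l_{\infty,1}(u,u')=\sup_{(v,v',x,y)}\sum_i|u_i(v_i,(v_i',v_{-i}),x,y)-u'_i(v_i,(v_i',v_{-i}),x,y)|$. $\mathcal N_{\infty,1}(\mathcal F,r)$ is the minimum number of open $l_{\infty,1}$-balls of radius $r$ centered at elements of $\mathcal F$ needed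 to cover $\mathcal F$ (assumed finite). Maxima are assumed attained and all functions measurable. *)

theory Defs
  imports "HOL-Probability.Probability"
begin

text \<open>Bidders are indexed by a finite type 'n (n = CARD('n)), items by a finite type 'm
 (m = CARD('m)). A valuation/bid matrix is a function 'n => 'm => real; row i is v i,
 and (v_i', v_{-i}) is v(i := v_i'). Bidder contexts are 'n => 'x, item contexts 'm => 'y.\<close>

definition mat_dom :: "real set \<Rightarrow> ('n \<Rightarrow> 'm \<Rightarrow> real) set" where
  "mat_dom V = {v. \<forall>i j. v i j \<in> V}"

definition row_dom :: "real set \<Rightarrow> ('m \<Rightarrow> real) set" where
  "row_dom V = {b. \<forall>j. b j \<in> V}"

definition util ::
  "('w \<Rightarrow> ('n \<Rightarrow> 'm \<Rightarrow> real) \<Rightarrow> ('n \<Rightarrow> 'x) \<Rightarrow> ('m \<Rightarrow> 'y) \<Rightarrow> 'n \<Rightarrow> 'm \<Rightarrow> real)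
   \<Rightarrow> ('w \<Rightarrow> ('n \<Rightarrow> 'm \<Rightarrow> real) \<Rightarrow> ('n \<Rightarrow> 'x) \<Rightarrow> ('m \<Rightarrow> 'y) \<Rightarrow> 'n \<Rightarrow> real)
   \<Rightarrow> 'w \<Rightarrow> 'n \<Rightarrow> ('m::finite \<Rightarrow> real) \<Rightarrow> ('n \<Rightarrow> 'm \<Rightarrow> real) \<Rightarrow> ('n \<Rightarrow> 'x) \<Rightarrow> ('m \<Rightarrow> 'y) \<Rightarrow> real"
  where
  "util g p w i vi b x y = (\<Sum>j\<in>UNIV. g w b x y i j * vi j) - p w b x y i"

text \<open>ex-post regret reg^w_i(v,x,y) (the max over misreports b_i' in V^m is written as a Sup;
 attainment is a hypothesis of the theorem)\<close>
definition regret ::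
  "real set
   \<Rightarrow> ('w \<Rightarrow> ('n \<Rightarrow> 'm \<Rightarrow> real) \<Rightarrow> ('n \<Rightarrow> 'x) \<Rightarrow> ('m \<Rightarrow> 'y) \<Rightarrow> 'n \<Rightarrow> 'm \<Rightarrow> real)
   \<Rightarrow> ('w \<Rightarrow> ('n \<Rightarrow> 'm \<Rightarrow> real) \<Rightarrow> ('n \<Rightarrow> 'x) \<Rightarrow> ('m \<Rightarrow> 'y) \<Rightarrow> 'n \<Rightarrow> real)
   \<Rightarrow> 'w \<Rightarrow> 'n \<Rightarrow> ('n \<Rightarrow> 'm::finite \<Rightarrow> real) \<Rightarrow> ('n \<Rightarrow> 'x) \<Rightarrow> ('m \<Rightarrow> 'y) \<Rightarrow> real"
  where
  "regret V g p w i v x y =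
     (SUP b'\<in>row_dom V. util g p w i (v i) (v(i := b')) x y) - util g p w i (v i) v x y"

definition dist_pay ::
  "real set \<Rightarrow> (('n \<Rightarrow> 'm \<Rightarrow> real) \<Rightarrow> ('n \<Rightarrow> 'x) \<Rightarrow> ('m \<Rightarrow> 'y) \<Rightarrow> 'n::finite \<Rightarrow> real)
   \<Rightarrow> (('n \<Rightarrow> 'm \<Rightarrow> real) \<Rightarrow> ('n \<Rightarrow> 'x) \<Rightarrow> ('m \<Rightarrow> 'y) \<Rightarrow> 'n \<Rightarrow> real) \<Rightarrow> ereal"
  where
  "dist_pay V q q' =
     (SUP (v, x, y) \<in> mat_dom V \<times> UNIV \<times> UNIV. ereal (\<Sum>i\<in>UNIV. \<bar>q v x y i - q' v x y i\<bar>))"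

definition dist_util ::
  "real set \<Rightarrow> ('n::finite \<Rightarrow> ('m \<Rightarrow> real) \<Rightarrow> ('n \<Rightarrow> 'm \<Rightarrow> real) \<Rightarrow> ('n \<Rightarrow> 'x) \<Rightarrow> ('m \<Rightarrow> 'y) \<Rightarrow> real)
   \<Rightarrow> ('n \<Rightarrow> ('m \<Rightarrow> real) \<Rightarrow> ('n \<Rightarrow> 'm \<Rightarrow> real) \<Rightarrow> ('n \<Rightarrow> 'x) \<Rightarrow> ('m \<Rightarrow> 'y) \<Rightarrow> real) \<Rightarrow> ereal"
  where
  "dist_util V u u' =
     (SUP (v, v', x, y) \<in> mat_dom V \<times> mat_dom V \<times> UNIV \<times> UNIV.
        ereal (\<Sum>i\<in>UNIV. \<bar>u i (v i) (v(i := v' i)) x y - u' i (v i) (v(i := v' i)) x y\<bar>))"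

definition is_cover :: "('f \<Rightarrow> 'f \<Rightarrow> ereal) \<Rightarrow> 'f set \<Rightarrow> real \<Rightarrow> 'f set \<Rightarrow> bool" where
  "is_cover d F r C \<longleftrightarrow> finite C \<and> C \<subseteq> F \<and> F \<subseteq> (\<Union>c\<in>C. {f\<in>F. d c f < ereal r})"

definition covering_number :: "('f \<Rightarrow> 'f \<Rightarrow> ereal) \<Rightarrow> 'f set \<Rightarrow> real \<Rightarrow> nat" where
  "covering_number d F r = (LEAST k. \<exists>C. is_cover d F r C \<and> card C = k)"

end

theory Submission
  imports Defs
begin

lemma PiM_indep_components:
  fixes M :: "'a measure"
  assumes M: "prob_space M" and L: "L > (0::nat)"
  shows "prob_space.indep_vars (PiM {..<L} (\<lambda>_. M)) (\<lambda>_. M) (\<lambda>l S. S l) {..<L}"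
proof -
  interpret P: prob_space "PiM {..<L} (\<lambda>_. M)"
    by (intro prob_space_PiM) (use M in auto)
  have ne: "{..<L} \<noteq> {}" using L by auto
  show ?thesis
  proof (subst P.indep_vars_iff_distr_eq_PiM'[OF ne])
    show "(\<lambda>S. S i) \<in> measurable (PiM {..<L} (\<lambda>_. M)) M" if "i \<in> {..<L}" for i
      using that measurable_component_singleton[of i "{..<L}" "\<lambda>_. M"] by simp
    have 1: "distr (PiM {..<L} (\<lambda>_. M)) (PiM {..<L} (\<lambda>_. M)) (\<lambda>x. \<lambda>i\<in>{..<L}. x i) = PiM {..<L} (\<lambda>_. M)"
    proof -
      have "distr (PiM {..<L} (\<lambda>_. M)) (PiM {..<L} (\<lambda>_. M)) (\<lambda>x. \<lambda>i\<in>{..<L}. x i)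
          = distr (PiM {..<L} (\<lambda>_. M)) (PiM {..<L} (\<lambda>_. M)) (\<lambda>x. x)"
        by (intro distr_cong) (auto simp: space_PiM PiE_def extensional_def restrict_def fun_eq_iff)
      also have "\<dots> = PiM {..<L} (\<lambda>_. M)" by (rule distr_id)
      finally show ?thesis .
    qed
    have 2: "(PiM {..<L} (\<lambda>i. distr (PiM {..<L} (\<lambda>_. M)) M (\<lambda>S. S i))) = PiM {..<L} (\<lambda>_. M)"
      by (intro PiM_cong refl distr_PiM_component) (use M in auto)
    show "distr (PiM {..<L} (\<lambda>_. M)) (PiM {..<L} (\<lambda>_. M)) (\<lambda>x. \<lambda>i\<in>{..<L}. x i) =
        (PiM {..<L} (\<lambda>i. distr (PiM {..<L} (\<lambda>_. M)) M (\<lambda>S. S i)))"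
      using 1 2 by simp
  qed
qed

lemma hoeff_iid:
  fixes M :: "'a measure" and f :: "'a \<Rightarrow> real"
  assumes M: "prob_space M" and f[measurable]: "f \<in> borel_measurable M"
    and bnd: "\<forall>s\<in>space M. 0 \<le> f s \<and> f s \<le> B" and B: "B > 0" and L: "L > (0::nat)" and t: "t \<ge> 0"
  shows "measure (PiM {..<L} (\<lambda>_. M)) {S \<in> space (PiM {..<L} (\<lambda>_. M)).
            \<bar>(\<Sum>l<L. f (S l)) / real L - (\<integral>s. f s \<partial>M)\<bar> \<ge> t} \<le> 2 * exp (-2 * real L * t\<^sup>2 / B\<^sup>2)"
proof -
  let ?P = "PiM {..<L} (\<lambda>_. M)"
  interpret P: prob_space ?P
    by (intro prob_space_PiM) (use M in auto)
  have ind: "P.indep_vars (\<lambda>_. borel) (\<lambda>l S. f (S l)) {..<L}"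
    by (rule P.indep_vars_compose2[OF PiM_indep_components[OF M L]]) (use f in auto)
  have d: "distr ?P borel (\<lambda>S. f (S i)) = distr M borel f" if "i < L" for i
  proof -
    have "distr ?P borel (\<lambda>S. f (S i)) = distr (distr ?P M (\<lambda>S. S i)) borel f"
      by (subst distr_distr) (use that in \<open>auto simp: comp_def\<close>)
    also have "distr ?P M (\<lambda>S. S i) = M"
      by (rule distr_PiM_component) (use M that in auto)
    finally show ?thesis .
  qed
  have H: "Hoeffding_ineq_iid ?P {..<L} (\<lambda>l S. f (S l)) (\<lambda>S. f (S 0)) 0 B"
    unfolding Hoeffding_ineq_iid_def
  proof unfold_locales
    show "finite {..<L}" by simp
    show "P.indep_vars (\<lambda>_. borel) (\<lambda>l S. f (S l)) {..<L}" by (rule ind)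
    show "distr ?P borel (\<lambda>S. f (S i)) = distr ?P borel (\<lambda>S. f (S 0))" if "i \<in> {..<L}" for i
      using d[of i] d[of 0] that L by auto
    show "(\<lambda>S. f (S 0)) \<in> borel_measurable (PiM {..<L} (\<lambda>_. M))"
      using L measurable_compose[OF measurable_component_singleton[of 0 "{..<L}" "\<lambda>_. M"] f] by simp
    show "AE x in ?P. f (x 0) \<in> {0..B}"
      by (rule AE_PiM_component[where P="\<lambda>x. f x \<in> {0..B}"]) (use M L bnd in \<open>auto intro!: AE_I2\<close>)
  qed
  have mu: "P.expectation (\<lambda>S. f (S 0)) = (\<integral>s. f s \<partial>M)"
  proof -
    have "P.expectation (\<lambda>S. f (S 0)) = integral\<^sup>L (distr ?P M (\<lambda>S. S 0)) f"
      by (subst integral_distr) (use L in auto)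
    also have "distr ?P M (\<lambda>S. S 0) = M"
      by (rule distr_PiM_component) (use M L in auto)
    finally show ?thesis .
  qed
  have "P.prob {x\<in>space ?P. t \<le> \<bar>(\<Sum>i\<in>{..<L}. f (x i)) / real (card {..<L}) - P.expectation (\<lambda>S. f (S 0))\<bar>}
        \<le> 2 * exp (-2 * real (card {..<L}) * t\<^sup>2 / (B - 0)\<^sup>2)"
    by (rule Hoeffding_ineq_iid.Hoeffding_ineq_abs_ge'[OF H t]) (use B L in auto)
  then show ?thesis using mu by simp
qed


lemma int_close:
  fixes M :: "'a measure" and f g :: "'a \<Rightarrow> real"
  assumes M: "prob_space M" and f: "f \<in> borel_measurable M" and g: "g \<in> borel_measurable M"
    and b: "\<forall>s\<in>space M. \<bar>f s\<bar> \<le> B \<and> \<bar>g s\<bar> \<le> B \<and> \<bar>f s - g s\<bar> \<le> r"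
  shows "\<bar>(\<integral>s. f s \<partial>M) - (\<integral>s. g s \<partial>M)\<bar> \<le> r"
proof -
  interpret prob_space M by (rule M)
  have fi: "integrable M f"
    by (rule integrable_const_bound[where B=B]) (use b f in \<open>auto intro!: AE_I2\<close>)
  have gi: "integrable M g"
    by (rule integrable_const_bound[where B=B]) (use b g in \<open>auto intro!: AE_I2\<close>)
  have 1: "(\<integral>s. f s - g s \<partial>M) \<le> r"
    by (rule integral_le_const) (use fi gi b in \<open>auto intro!: AE_I2\<close>)
  have 2: "(\<integral>s. g s - f s \<partial>M) \<le> r"
    by (rule integral_le_const) (use fi gi b in \<open>auto intro!: AE_I2\<close>)
  have "(\<integral>s. f s - g s \<partial>M) = (\<integral>s. f s \<partial>M) - (\<integral>s. g s \<partial>M)"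
    by (rule Bochner_Integration.integral_diff[OF fi gi])
  moreover have "(\<integral>s. g s - f s \<partial>M) = (\<integral>s. g s \<partial>M) - (\<integral>s. f s \<partial>M)"
    by (rule Bochner_Integration.integral_diff[OF gi fi])
  ultimately show ?thesis using 1 2 by linarith
qed

lemma sum_abs_diff_le:
  fixes a b :: "'i \<Rightarrow> real"
  shows "\<bar>(\<Sum>i\<in>A. a i) - (\<Sum>i\<in>A. b i)\<bar> \<le> (\<Sum>i\<in>A. \<bar>a i - b i\<bar>)"
  by (metis sum_subtractf sum_abs)

lemma avg_close:
  fixes a b :: "nat \<Rightarrow> real"
  assumes "\<forall>l<L. \<bar>a l - b l\<bar> \<le> r" and "L > 0"
  shows "\<bar>(\<Sum>l<L. a l) / real L - (\<Sum>l<L. b l) / real L\<bar> \<le> r"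
proof -
  have "\<bar>(\<Sum>l<L. a l) - (\<Sum>l<L. b l)\<bar> \<le> (\<Sum>l<L. \<bar>a l - b l\<bar>)" by (rule sum_abs_diff_le)
  also have "\<dots> \<le> (\<Sum>l<L. r)" by (rule sum_mono) (use assms in auto)
  also have "\<dots> = real L * r" by simp
  finally have "\<bar>(\<Sum>l<L. a l) - (\<Sum>l<L. b l)\<bar> / real L \<le> r"
    using assms(2) by (simp add: divide_simps mult.commute)
  moreover have "(\<Sum>l<L. a l) / real L - (\<Sum>l<L. b l) / real L = ((\<Sum>l<L. a l) - (\<Sum>l<L. b l)) / real L"
    by (simp add: diff_divide_distrib)
  ultimately show ?thesis by simp
qed

lemma union_bound_term:
  fixes N :: nat and K \<delta> :: real
  assumes "0 < \<delta>" and K: "K \<ge> ln (4 / \<delta>) + ln (real N)"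
  shows "real N * (2 * exp (- K)) \<le> \<delta> / 2"
proof (cases "N = 0")
  case True then show ?thesis using assms by simp
next
  case False
  then have N: "real N > 0" by simp
  have "exp (- K) \<le> exp (- (ln (4 / \<delta>) + ln (real N)))" using K by simp
  also have "\<dots> = \<delta> / (4 * real N)"
    using N assms(1) by (simp add: exp_diff exp_minus field_simps)
  finally have "exp (- K) \<le> \<delta> / (4 * real N)" .
  then have "real N * (2 * exp (- K)) \<le> real N * (2 * (\<delta> / (4 * real N)))"
    using N by (intro mult_left_mono) auto
  also have "\<dots> = \<delta> / 2" using N by (simp add: field_simps)
  finally show ?thesis .
qed

theorem theorem4:
  fixes M :: "(('n::finite \<Rightarrow> 'm::finite \<Rightarrow> real) \<times> ('n \<Rightarrow> 'x) \<times> ('m \<Rightarrow> 'y)) measure"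
    and V :: "real set"
    and \<Omega> :: "'w set"
    and g :: "'w \<Rightarrow> ('n \<Rightarrow> 'm \<Rightarrow> real) \<Rightarrow> ('n \<Rightarrow> 'x) \<Rightarrow> ('m \<Rightarrow> 'y) \<Rightarrow> 'n \<Rightarrow> 'm \<Rightarrow> real"
    and p :: "'w \<Rightarrow> ('n \<Rightarrow> 'm \<Rightarrow> real) \<Rightarrow> ('n \<Rightarrow> 'x) \<Rightarrow> ('m \<Rightarrow> 'y) \<Rightarrow> 'n \<Rightarrow> real"
    and L :: nat and \<delta> \<epsilon> :: real
  defines "Pcls \<equiv> (\<lambda>w. p w) ` \<Omega>"
    and "Ucls \<equiv> (\<lambda>w. \<lambda>i vi b x y. util g p w i vi b x y) ` \<Omega>"
  assumes M: "prob_space M"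
    and V_nonneg: "V \<subseteq> {0..}"
    and g_range: "\<forall>w\<in>\<Omega>. \<forall>b\<in>mat_dom V. \<forall>x y i j. 0 \<le> g w b x y i j \<and> g w b x y i j \<le> 1"
    and g_sum: "\<forall>w\<in>\<Omega>. \<forall>b\<in>mat_dom V. \<forall>x y j. (\<Sum>i\<in>UNIV. g w b x y i j) \<le> 1"
    and p_nonneg: "\<forall>w\<in>\<Omega>. \<forall>b\<in>mat_dom V. \<forall>x y i. 0 \<le> p w b x y i"
    and p_IR: "\<forall>w\<in>\<Omega>. \<forall>b\<in>mat_dom V. \<forall>x y i. p w b x y i \<le> (\<Sum>j\<in>UNIV. g w b x y i j * b i j)"
    and max_attained: "\<forall>w\<in>\<Omega>. \<forall>v\<in>mat_dom V. \<forall>x y i. \<exists>b'\<in>row_dom V. \<forall>b''\<in>row_dom V.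
           util g p w i (v i) (v(i := b'')) x y \<le> util g p w i (v i) (v(i := b')) x y"
    and support: "\<forall>s\<in>space M. fst s \<in> mat_dom V \<and>
           (\<forall>i. \<forall>S. (\<Sum>j\<in>S. fst s i j) \<le> 1)"
    and meas_p: "\<forall>w\<in>\<Omega>. \<forall>i. (\<lambda>(v, x, y). p w v x y i) \<in> borel_measurable M"
    and meas_reg: "\<forall>w\<in>\<Omega>. \<forall>i. (\<lambda>(v, x, y). regret V g p w i v x y) \<in> borel_measurable M"
    and L_pos: "L > 0"
    and \<delta>: "0 < \<delta>" "\<delta> < 1"
    and \<epsilon>_pos: "\<epsilon> > 0"
    and cover_P_fin: "\<exists>C. is_cover (dist_pay V) Pcls (\<epsilon> / 3) C"
    and cover_U_fin: "\<exists>C. is_cover (dist_util V) Ucls (\<epsilon> / 6) C"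
    and \<epsilon>_bound: "\<epsilon> \<ge> sqrt ((9 * real (CARD('n))^2 / (2 * real L)) *
           (ln (4 / \<delta>) + max (ln (real (covering_number (dist_pay V) Pcls (\<epsilon> / 3))))
                                 (ln (real (covering_number (dist_util V) Ucls (\<epsilon> / 6))))))"
  shows "\<exists>A \<in> sets (PiM {..<L} (\<lambda>_. M)).
           measure (PiM {..<L} (\<lambda>_. M)) A \<ge> 1 - \<delta> \<and>
           (\<forall>S\<in>A. \<forall>w\<in>\<Omega>.
              \<bar>(\<integral>s. (\<Sum>i\<in>UNIV. p w (fst s) (fst (snd s)) (snd (snd s)) i) \<partial>M)
                - (1 / real L) * (\<Sum>l<L. \<Sum>i\<in>UNIV. p w (fst (S l)) (fst (snd (S l))) (snd (snd (S l))) i)\<bar> \<le> \<epsilon>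
            \<and> \<bar>(\<integral>s. (\<Sum>i\<in>UNIV. regret V g p w i (fst s) (fst (snd s)) (snd (snd s))) \<partial>M)
                - (\<Sum>i\<in>UNIV. (1 / real L) * (\<Sum>l<L. regret V g p w i (fst (S l)) (fst (snd (S l))) (snd (snd (S l)))))\<bar> \<le> \<epsilon>)"
proof -
  interpret M: prob_space M by (rule M)
  let ?P = "PiM {..<L} (\<lambda>_. M)"
  interpret P: prob_space ?P by (intro prob_space_PiM) (use M in auto)
  define nn where "nn = real CARD('n)"
  have nn_pos: "nn > 0" unfolding nn_def by simp
  define Fp where "Fp = (\<lambda>w s. \<Sum>i\<in>UNIV. p w (fst s) (fst (snd s)) (snd (snd s)) i)"
  define Fr where "Fr = (\<lambda>w s. \<Sum>i\<in>UNIV. regret V g p w i (fst s) (fst (snd s)) (snd (snd s)))"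
  define Ucl where "Ucl = (\<lambda>w. \<lambda>i vi b x y. util g p w i vi b x y)"
  have Ucls_eq: "Ucls = Ucl ` \<Omega>" unfolding Ucls_def Ucl_def ..
  have Pcls_eq: "Pcls = p ` \<Omega>" unfolding Pcls_def by simp
  have sp: "fst s \<in> mat_dom V" "\<And>i. (\<Sum>j\<in>UNIV. fst s i j) \<le> 1" if "s \<in> space M" for s
    using support that by auto
  have mat_nonneg: "v i j \<ge> 0" if "v \<in> mat_dom V" for v :: "'n \<Rightarrow> 'm \<Rightarrow> real" and i j
    using that V_nonneg unfolding mat_dom_def by auto
  have upd_dom: "v(i := b') \<in> mat_dom V" if "v \<in> mat_dom V" "b' \<in> row_dom V" for v :: "'n \<Rightarrow> 'm \<Rightarrow> real" and i b'
    using that unfolding mat_dom_def row_dom_def by auto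
  have row_in: "v i \<in> row_dom V" if "v \<in> mat_dom V" for v :: "'n \<Rightarrow> 'm \<Rightarrow> real" and i
    using that unfolding mat_dom_def row_dom_def by auto

  have Fp_meas: "Fp w \<in> borel_measurable M" if "w \<in> \<Omega>" for w
  proof -
    have "(\<lambda>s. p w (fst s) (fst (snd s)) (snd (snd s)) i) \<in> borel_measurable M" for i
    proof -
      have "(\<lambda>s. p w (fst s) (fst (snd s)) (snd (snd s)) i) = (\<lambda>(v, x, y). p w v x y i)"
        by (auto simp: fun_eq_iff split: prod.splits)
      then show ?thesis using meas_p that by simp
    qed
    then show ?thesis unfolding Fp_def by (intro borel_measurable_sum) auto
  qed
  have Fr_meas: "Fr w \<in> borel_measurable M" if "w \<in> \<Omega>" for w
  proof -
    have "(\<lambda>s. regret V g p w i (fst s) (fst (snd s)) (snd (snd s))) \<in> borel_measurable M" for i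
    proof -
      have "(\<lambda>s. regret V g p w i (fst s) (fst (snd s)) (snd (snd s))) = (\<lambda>(v, x, y). regret V g p w i v x y)"
        by (auto simp: fun_eq_iff split: prod.splits)
      then show ?thesis using meas_reg that by simp
    qed
    then show ?thesis unfolding Fr_def by (intro borel_measurable_sum) auto
  qed

  have p_le1: "p w v x y i \<le> 1" if "w \<in> \<Omega>" "v \<in> mat_dom V" "\<forall>i. (\<Sum>j\<in>UNIV. v i j) \<le> 1" for w v x y i
  proof -
    have "p w v x y i \<le> (\<Sum>j\<in>UNIV. g w v x y i j * v i j)" using p_IR that by blast
    also have "\<dots> \<le> (\<Sum>j\<in>UNIV. v i j)"
      by (intro sum_mono mult_left_le_one_le) (use g_range that mat_nonneg in auto)
    also have "\<dots> \<le> 1" using that by auto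
    finally show ?thesis .
  qed
  have Fp_bnd: "0 \<le> Fp w s \<and> Fp w s \<le> nn" if "w \<in> \<Omega>" "s \<in> space M" for w s
  proof
    show "0 \<le> Fp w s" unfolding Fp_def by (intro sum_nonneg) (use p_nonneg sp that in auto)
    have "Fp w s \<le> (\<Sum>i\<in>(UNIV::'n set). 1)" unfolding Fp_def
      by (intro sum_mono p_le1) (use sp that in auto)
    then show "Fp w s \<le> nn" by (simp add: nn_def)
  qed
  have util_le1: "util g p w i (v i) b x y \<le> 1"
    if "w \<in> \<Omega>" "v \<in> mat_dom V" "b \<in> mat_dom V" "\<forall>i. (\<Sum>j\<in>UNIV. v i j) \<le> 1" for w v b x y i
  proof -
    have "(\<Sum>j\<in>UNIV. g w b x y i j * v i j) \<le> (\<Sum>j\<in>UNIV. v i j)"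
      by (intro sum_mono mult_left_le_one_le) (use g_range that mat_nonneg in auto)
    also have "\<dots> \<le> 1" using that by auto
    finally have "(\<Sum>j\<in>UNIV. g w b x y i j * v i j) \<le> 1" .
    moreover have "0 \<le> p w b x y i" using p_nonneg that by blast
    ultimately show ?thesis unfolding util_def by linarith
  qed
  have util_ge0: "util g p w i (v i) v x y \<ge> 0" if "w \<in> \<Omega>" "v \<in> mat_dom V" for w v x y i
    unfolding util_def using p_IR that by force
  have reg_eq: "\<exists>b'\<in>row_dom V. regret V g p w i v x y = util g p w i (v i) (v(i := b')) x y - util g p w i (v i) v x y
      \<and> (\<forall>b''\<in>row_dom V. util g p w i (v i) (v(i := b'')) x y \<le> util g p w i (v i) (v(i := b')) x y)"
    if wv: "w \<in> \<Omega>" "v \<in> mat_dom V" for w v x y i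
  proof -
    obtain b' where b': "b' \<in> row_dom V" "\<forall>b''\<in>row_dom V. util g p w i (v i) (v(i := b'')) x y \<le> util g p w i (v i) (v(i := b')) x y"
      using max_attained wv by blast
    have "(SUP b''\<in>row_dom V. util g p w i (v i) (v(i := b'')) x y) = util g p w i (v i) (v(i := b')) x y"
      by (rule cSup_eq_maximum) (use b' in auto)
    then show ?thesis using b' unfolding regret_def by auto
  qed
  have reg_bnd: "0 \<le> regret V g p w i v x y \<and> regret V g p w i v x y \<le> 1"
    if wv: "w \<in> \<Omega>" "v \<in> mat_dom V" "\<forall>i. (\<Sum>j\<in>UNIV. v i j) \<le> 1" for w v x y i
  proof -
    obtain b' where b': "b' \<in> row_dom V" "regret V g p w i v x y = util g p w i (v i) (v(i := b')) x y - util g p w i (v i) v x y"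
        "\<forall>b''\<in>row_dom V. util g p w i (v i) (v(i := b'')) x y \<le> util g p w i (v i) (v(i := b')) x y"
      using reg_eq[OF wv(1,2)] by blast
    have "util g p w i (v i) (v(i := v i)) x y \<le> util g p w i (v i) (v(i := b')) x y"
      using b'(3) row_in[OF wv(2)] by blast
    then have 1: "util g p w i (v i) v x y \<le> util g p w i (v i) (v(i := b')) x y" by simp
    have 2: "util g p w i (v i) (v(i := b')) x y \<le> 1"
      by (rule util_le1[OF wv(1,2) upd_dom[OF wv(2) b'(1)] wv(3)])
    show ?thesis using 1 2 util_ge0[OF wv(1,2), of i x y] b'(2) by linarith
  qed
  have Fr_bnd: "0 \<le> Fr w s \<and> Fr w s \<le> nn" if "w \<in> \<Omega>" "s \<in> space M" for w s
  proof
    show "0 \<le> Fr w s" unfolding Fr_def by (intro sum_nonneg) (use reg_bnd sp that in auto)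
    have "Fr w s \<le> (\<Sum>i\<in>(UNIV::'n set). 1)" unfolding Fr_def
      by (intro sum_mono) (use reg_bnd sp that in auto)
    then show "Fr w s \<le> nn" by (simp add: nn_def)
  qed
  have reg_close: "\<bar>(\<Sum>i\<in>UNIV. regret V g p w i v x y) - (\<Sum>i\<in>UNIV. regret V g p w' i v x y)\<bar> \<le> \<epsilon> / 3"
    if ww: "w \<in> \<Omega>" "w' \<in> \<Omega>" "v \<in> mat_dom V" "dist_util V (Ucl w') (Ucl w) < ereal (\<epsilon> / 6)" for w w' v x y
  proof -
    have dd: "(\<Sum>i\<in>UNIV. \<bar>util g p w' i (v i) (v(i := v' i)) x y - util g p w i (v i) (v(i := v' i)) x y\<bar>) < \<epsilon> / 6"
      if "v' \<in> mat_dom V" for v'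
    proof -
      have "ereal (\<Sum>i\<in>UNIV. \<bar>Ucl w' i (v i) (v(i := v' i)) x y - Ucl w i (v i) (v(i := v' i)) x y\<bar>) \<le> dist_util V (Ucl w') (Ucl w)"
        unfolding dist_util_def
        by (rule SUP_upper2[of "(v, v', x, y)"]) (use ww(3) that in auto)
      from le_less_trans[OF this ww(4)] show ?thesis unfolding Ucl_def by simp
    qed
    let ?U = "\<lambda>w i b. util g p w i (v i) (v(i := b)) x y"
    have "\<forall>i. \<exists>b\<in>row_dom V. regret V g p w i v x y = ?U w i b - util g p w i (v i) v x y \<and> (\<forall>b''\<in>row_dom V. ?U w i b'' \<le> ?U w i b)"
      using reg_eq[OF ww(1,3)] by blast
    then obtain b where b: "\<And>i. b i \<in> row_dom V" "\<And>i. regret V g p w i v x y = ?U w i (b i) - util g p w i (v i) v x y"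
      "\<And>i b''. b'' \<in> row_dom V \<Longrightarrow> ?U w i b'' \<le> ?U w i (b i)"
      by metis
    have "\<forall>i. \<exists>b\<in>row_dom V. regret V g p w' i v x y = ?U w' i b - util g p w' i (v i) v x y \<and> (\<forall>b''\<in>row_dom V. ?U w' i b'' \<le> ?U w' i b)"
      using reg_eq[OF ww(2,3)] by blast
    then obtain b' where b': "\<And>i. b' i \<in> row_dom V" "\<And>i. regret V g p w' i v x y = ?U w' i (b' i) - util g p w' i (v i) v x y"
      "\<And>i b''. b'' \<in> row_dom V \<Longrightarrow> ?U w' i b'' \<le> ?U w' i (b' i)"
      by metis
    define d where "d = (\<lambda>i. if ?U w' i (b' i) \<le> ?U w i (b i) then b i else b' i)"
    have d_dom: "d \<in> mat_dom V"
      using b(1) b'(1) unfolding d_def mat_dom_def row_dom_def by auto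
    have per: "\<bar>regret V g p w i v x y - regret V g p w' i v x y\<bar>
        \<le> \<bar>util g p w' i (v i) (v(i := d i)) x y - util g p w i (v i) (v(i := d i)) x y\<bar>
          + \<bar>util g p w' i (v i) (v(i := v i)) x y - util g p w i (v i) (v(i := v i)) x y\<bar>" for i
    proof (cases "?U w' i (b' i) \<le> ?U w i (b i)")
      case True
      have "?U w' i (b i) \<le> ?U w' i (b' i)" by (rule b'(3)[OF b(1)])
      then show ?thesis using True b(2)[of i] b'(2)[of i] unfolding d_def by (simp add: abs_if)
    next
      case False
      have "?U w i (b' i) \<le> ?U w i (b i)" by (rule b(3)[OF b'(1)])
      then show ?thesis using False b(2)[of i] b'(2)[of i] unfolding d_def by (simp add: abs_if)
    qed
    have "\<bar>(\<Sum>i\<in>UNIV. regret V g p w i v x y) - (\<Sum>i\<in>UNIV. regret V g p w' i v x y)\<bar>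
        \<le> (\<Sum>i\<in>UNIV. \<bar>regret V g p w i v x y - regret V g p w' i v x y\<bar>)" by (rule sum_abs_diff_le)
    also have "\<dots> \<le> (\<Sum>i\<in>UNIV. \<bar>util g p w' i (v i) (v(i := d i)) x y - util g p w i (v i) (v(i := d i)) x y\<bar>
          + \<bar>util g p w' i (v i) (v(i := v i)) x y - util g p w i (v i) (v(i := v i)) x y\<bar>)"
      by (rule sum_mono) (rule per)
    also have "\<dots> = (\<Sum>i\<in>UNIV. \<bar>util g p w' i (v i) (v(i := d i)) x y - util g p w i (v i) (v(i := d i)) x y\<bar>)
          + (\<Sum>i\<in>UNIV. \<bar>util g p w' i (v i) (v(i := v i)) x y - util g p w i (v i) (v(i := v i)) x y\<bar>)"
      by (rule sum.distrib)
    also have "\<dots> \<le> \<epsilon> / 6 + \<epsilon> / 6"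
      using dd[OF d_dom] dd[OF ww(3)] by linarith
    finally show ?thesis by simp
  qed
  obtain CP where CP: "is_cover (dist_pay V) Pcls (\<epsilon> / 3) CP" "card CP = covering_number (dist_pay V) Pcls (\<epsilon> / 3)"
    using cover_P_fin LeastI_ex[of "\<lambda>k. \<exists>C. is_cover (dist_pay V) Pcls (\<epsilon> / 3) C \<and> card C = k"]
    unfolding covering_number_def by blast
  obtain CU where CU: "is_cover (dist_util V) Ucls (\<epsilon> / 6) CU" "card CU = covering_number (dist_util V) Ucls (\<epsilon> / 6)"
    using cover_U_fin LeastI_ex[of "\<lambda>k. \<exists>C. is_cover (dist_util V) Ucls (\<epsilon> / 6) C \<and> card C = k"]
    unfolding covering_number_def by blast
  have CP_fin: "finite CP" and CP_sub: "CP \<subseteq> p ` \<Omega>"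
    and CP_cov: "\<And>f. f \<in> Pcls \<Longrightarrow> \<exists>c\<in>CP. dist_pay V c f < ereal (\<epsilon> / 3)"
    using CP(1) Pcls_eq unfolding is_cover_def by auto
  have CU_fin: "finite CU" and CU_sub: "CU \<subseteq> Ucl ` \<Omega>"
    and CU_cov: "\<And>f. f \<in> Ucls \<Longrightarrow> \<exists>c\<in>CU. dist_util V c f < ereal (\<epsilon> / 6)"
    using CU(1) Ucls_eq unfolding is_cover_def by auto
  define wP where "wP = (\<lambda>c. inv_into \<Omega> p c)"
  define wU where "wU = (\<lambda>c. inv_into \<Omega> Ucl c)"
  have wP: "wP c \<in> \<Omega>" "p (wP c) = c" if "c \<in> CP" for c
    using CP_sub that unfolding wP_def by (auto intro: inv_into_into f_inv_into_f)
  have wU: "wU c \<in> \<Omega>" "Ucl (wU c) = c" if "c \<in> CU" for c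
    using CU_sub that unfolding wU_def by (auto intro: inv_into_into f_inv_into_f)

  define BP where "BP = (\<lambda>c. {S \<in> space ?P. \<epsilon> / 3 \<le> \<bar>(\<Sum>l<L. Fp (wP c) (S l)) / real L - (\<integral>s. Fp (wP c) s \<partial>M)\<bar>})"
  define BU where "BU = (\<lambda>c. {S \<in> space ?P. \<epsilon> / 3 \<le> \<bar>(\<Sum>l<L. Fr (wU c) (S l)) / real L - (\<integral>s. Fr (wU c) s \<partial>M)\<bar>})"
  have ev_meas: "{S \<in> space ?P. \<epsilon> / 3 \<le> \<bar>(\<Sum>l<L. F (S l)) / real L - c\<bar>} \<in> sets ?P"
    if F: "F \<in> borel_measurable M" for F :: "_ \<Rightarrow> real" and c
  proof -
    have [measurable]: "(\<lambda>S. F (S l)) \<in> borel_measurable ?P" if "l < L" for l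
      using measurable_compose[OF measurable_component_singleton[of l "{..<L}" "\<lambda>_. M"] F] that by simp
    have "(\<lambda>S. \<bar>(\<Sum>l<L. F (S l)) / real L - c\<bar>) \<in> borel_measurable ?P" by measurable
    then show ?thesis by measurable
  qed
  have BP_meas: "BP c \<in> sets ?P" if "c \<in> CP" for c
    unfolding BP_def by (rule ev_meas[OF Fp_meas[OF wP(1)[OF that]]])
  have BU_meas: "BU c \<in> sets ?P" if "c \<in> CU" for c
    unfolding BU_def by (rule ev_meas[OF Fr_meas[OF wU(1)[OF that]]])
  define e where "e = 2 * exp (- (2 * real L * (\<epsilon> / 3)\<^sup>2 / nn\<^sup>2))"
  have BP_prob: "measure ?P (BP c) \<le> e" if "c \<in> CP" for c
    unfolding BP_def e_def
    using hoeff_iid[OF M Fp_meas[OF wP(1)[OF that]] _ nn_pos L_pos, of "\<epsilon> / 3"] Fp_bnd[OF wP(1)[OF that]] \<epsilon>_pos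
    by simp
  have BU_prob: "measure ?P (BU c) \<le> e" if "c \<in> CU" for c
    unfolding BU_def e_def
    using hoeff_iid[OF M Fr_meas[OF wU(1)[OF that]] _ nn_pos L_pos, of "\<epsilon> / 3"] Fr_bnd[OF wU(1)[OF that]] \<epsilon>_pos
    by simp
  define K where "K = 2 * real L * (\<epsilon> / 3)\<^sup>2 / nn\<^sup>2"
  have e_K: "e = 2 * exp (- K)" unfolding e_def K_def by simp
  define X where "X = (9 * real (CARD('n))^2 / (2 * real L)) *
           (ln (4 / \<delta>) + max (ln (real (covering_number (dist_pay V) Pcls (\<epsilon> / 3))))
                                 (ln (real (covering_number (dist_util V) Ucls (\<epsilon> / 6)))))"
  have X_le: "X \<le> \<epsilon>\<^sup>2"
  proof (cases "X \<ge> 0")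
    case True
    have "sqrt X \<le> \<epsilon>" using \<epsilon>_bound unfolding X_def .
    then have "(sqrt X)\<^sup>2 \<le> \<epsilon>\<^sup>2" by (intro power_mono) (use True in auto)
    then show ?thesis using True by simp
  next
    case False then show ?thesis by (smt (verit) zero_le_power2)
  qed
  have K_ge: "K \<ge> ln (4 / \<delta>) + max (ln (real (covering_number (dist_pay V) Pcls (\<epsilon> / 3))))
                                 (ln (real (covering_number (dist_util V) Ucls (\<epsilon> / 6))))"
  proof -
    let ?Y = "ln (4 / \<delta>) + max (ln (real (covering_number (dist_pay V) Pcls (\<epsilon> / 3))))
                                 (ln (real (covering_number (dist_util V) Ucls (\<epsilon> / 6))))"
    have "X = 9 * nn\<^sup>2 / (2 * real L) * ?Y" unfolding X_def nn_def by simp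
    with X_le have "9 * nn\<^sup>2 / (2 * real L) * ?Y \<le> \<epsilon>\<^sup>2" by simp
    then have "?Y \<le> \<epsilon>\<^sup>2 * (2 * real L) / (9 * nn\<^sup>2)"
      using nn_pos L_pos by (simp add: field_simps)
    also have "\<dots> = K" unfolding K_def by (simp add: field_simps power2_eq_square)
    finally show ?thesis .
  qed
  have NP_bound: "real (card CP) * e \<le> \<delta> / 2"
    unfolding e_K by (rule union_bound_term) (use \<delta> K_ge CP(2) in auto)
  have NU_bound: "real (card CU) * e \<le> \<delta> / 2"
    unfolding e_K by (rule union_bound_term) (use \<delta> K_ge CU(2) in auto)
  define Bad where "Bad = (\<Union>c\<in>CP. BP c) \<union> (\<Union>c\<in>CU. BU c)"
  have BPU: "(\<Union>c\<in>CP. BP c) \<in> sets ?P" "(\<Union>c\<in>CU. BU c) \<in> sets ?P"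
    using BP_meas BU_meas CP_fin CU_fin by (auto intro!: sets.finite_UN)
  have Bad_meas: "Bad \<in> sets ?P" unfolding Bad_def
    using BPU by auto
  have "measure ?P Bad \<le> measure ?P (\<Union>c\<in>CP. BP c) + measure ?P (\<Union>c\<in>CU. BU c)"
    unfolding Bad_def by (rule measure_Un_le[OF BPU])
  also have "\<dots> \<le> (\<Sum>c\<in>CP. measure ?P (BP c)) + (\<Sum>c\<in>CU. measure ?P (BU c))"
    by (intro add_mono P.finite_measure_subadditive_finite) (use BP_meas BU_meas CP_fin CU_fin in auto)
  also have "\<dots> \<le> (\<Sum>c\<in>CP. e) + (\<Sum>c\<in>CU. e)"
    by (intro add_mono sum_mono) (use BP_prob BU_prob in auto)
  also have "\<dots> \<le> \<delta> / 2 + \<delta> / 2" using NP_bound NU_bound by simp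
  finally have Bad_prob: "measure ?P Bad \<le> \<delta>" by simp
  define A where "A = space ?P - Bad"
  have A_meas: "A \<in> sets ?P" unfolding A_def using Bad_meas by auto
  have A_prob: "measure ?P A \<ge> 1 - \<delta>"
    unfolding A_def using P.prob_compl[OF Bad_meas] Bad_prob by simp
  have Sl: "S l \<in> space M" if "S \<in> space ?P" "l < L" for S l
    using that by (auto simp: space_PiM PiE_def Pi_def)
  show ?thesis
  proof (intro bexI[of _ A] conjI ballI)
    show "A \<in> sets ?P" by (rule A_meas)
    show "measure ?P A \<ge> 1 - \<delta>" by (rule A_prob)
  next
    fix S w assume S: "S \<in> A" and w: "w \<in> \<Omega>"
    have S_sp: "S \<in> space ?P" and S_nb: "S \<notin> Bad" using S unfolding A_def by auto
    obtain c where c: "c \<in> CP" "dist_pay V c (p w) < ereal (\<epsilon> / 3)"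
      using CP_cov[of "p w"] w unfolding Pcls_def by auto
    define w' where "w' = wP c"
    have w': "w' \<in> \<Omega>" "p w' = c" using wP[OF c(1)] unfolding w'_def by auto
    have closeP: "\<bar>Fp w s - Fp w' s\<bar> \<le> \<epsilon> / 3" if "s \<in> space M" for s
    proof -
      have "ereal (\<Sum>i\<in>UNIV. \<bar>c (fst s) (fst (snd s)) (snd (snd s)) i - p w (fst s) (fst (snd s)) (snd (snd s)) i\<bar>) \<le> dist_pay V c (p w)"
      proof -
        obtain v xx yy where s: "s = (v, xx, yy)" by (cases s)
        show ?thesis
          unfolding dist_pay_def s by (rule SUP_upper2[of "(v, xx, yy)"]) (use sp(1)[OF that] s in auto)
      qed
      from le_less_trans[OF this c(2)]
      have "(\<Sum>i\<in>UNIV. \<bar>c (fst s) (fst (snd s)) (snd (snd s)) i - p w (fst s) (fst (snd s)) (snd (snd s)) i\<bar>) \<le> \<epsilon> / 3"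
        by simp
      moreover have "\<bar>Fp w s - Fp w' s\<bar> \<le> (\<Sum>i\<in>UNIV. \<bar>c (fst s) (fst (snd s)) (snd (snd s)) i - p w (fst s) (fst (snd s)) (snd (snd s)) i\<bar>)"
        unfolding Fp_def w'(2) using sum_abs_diff_le[where a="\<lambda>i. c (fst s) (fst (snd s)) (snd (snd s)) i" and b="\<lambda>i. p w (fst s) (fst (snd s)) (snd (snd s)) i" and A=UNIV]
        by (simp add: abs_minus_commute)
      ultimately show ?thesis by linarith
    qed
    have P1: "\<bar>(\<integral>s. Fp w s \<partial>M) - (\<integral>s. Fp w' s \<partial>M)\<bar> \<le> \<epsilon> / 3"
      by (rule int_close[OF M Fp_meas[OF w] Fp_meas[OF w'(1)], where B=nn]) (use Fp_bnd w w'(1) closeP in fastforce)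
    have P2: "\<bar>(\<Sum>l<L. Fp w' (S l)) / real L - (\<integral>s. Fp w' s \<partial>M)\<bar> < \<epsilon> / 3"
      using S_nb S_sp c(1) unfolding Bad_def BP_def w'_def by auto
    have P3: "\<bar>(\<Sum>l<L. Fp w (S l)) / real L - (\<Sum>l<L. Fp w' (S l)) / real L\<bar> \<le> \<epsilon> / 3"
      by (rule avg_close) (use closeP Sl[OF S_sp] L_pos in auto)
    have "(1 / real L) * (\<Sum>l<L. \<Sum>i\<in>UNIV. p w (fst (S l)) (fst (snd (S l))) (snd (snd (S l))) i)
        = (\<Sum>l<L. Fp w (S l)) / real L" unfolding Fp_def by simp
    moreover have "(\<integral>s. (\<Sum>i\<in>UNIV. p w (fst s) (fst (snd s)) (snd (snd s)) i) \<partial>M) = (\<integral>s. Fp w s \<partial>M)"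
      unfolding Fp_def ..
    ultimately show "\<bar>(\<integral>s. (\<Sum>i\<in>UNIV. p w (fst s) (fst (snd s)) (snd (snd s)) i) \<partial>M)
                - (1 / real L) * (\<Sum>l<L. \<Sum>i\<in>UNIV. p w (fst (S l)) (fst (snd (S l))) (snd (snd (S l))) i)\<bar> \<le> \<epsilon>"
      using P1 P2 P3 by linarith
  next
    fix S w assume S: "S \<in> A" and w: "w \<in> \<Omega>"
    have S_sp: "S \<in> space ?P" and S_nb: "S \<notin> Bad" using S unfolding A_def by auto
    obtain c where c: "c \<in> CU" "dist_util V c (Ucl w) < ereal (\<epsilon> / 6)"
      using CU_cov[of "Ucl w"] w unfolding Ucls_eq by auto
    define w' where "w' = wU c"
    have w': "w' \<in> \<Omega>" "Ucl w' = c" using wU[OF c(1)] unfolding w'_def by auto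
    have closeR: "\<bar>Fr w s - Fr w' s\<bar> \<le> \<epsilon> / 3" if "s \<in> space M" for s
      unfolding Fr_def by (rule reg_close[OF w w'(1) sp(1)[OF that]]) (use c(2) w'(2) in simp)
    have R1: "\<bar>(\<integral>s. Fr w s \<partial>M) - (\<integral>s. Fr w' s \<partial>M)\<bar> \<le> \<epsilon> / 3"
      by (rule int_close[OF M Fr_meas[OF w] Fr_meas[OF w'(1)], where B=nn]) (use Fr_bnd w w'(1) closeR in fastforce)
    have R2: "\<bar>(\<Sum>l<L. Fr w' (S l)) / real L - (\<integral>s. Fr w' s \<partial>M)\<bar> < \<epsilon> / 3"
      using S_nb S_sp c(1) unfolding Bad_def BU_def w'_def by auto
    have R3: "\<bar>(\<Sum>l<L. Fr w (S l)) / real L - (\<Sum>l<L. Fr w' (S l)) / real L\<bar> \<le> \<epsilon> / 3"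
      by (rule avg_close) (use closeR Sl[OF S_sp] L_pos in auto)
    have "(\<Sum>i\<in>UNIV. (1 / real L) * (\<Sum>l<L. regret V g p w i (fst (S l)) (fst (snd (S l))) (snd (snd (S l)))))
        = (\<Sum>l<L. Fr w (S l)) / real L"
      unfolding Fr_def by (simp add: sum_divide_distrib[symmetric] sum.swap[of _ UNIV])
    moreover have "(\<integral>s. (\<Sum>i\<in>UNIV. regret V g p w i (fst s) (fst (snd s)) (snd (snd s))) \<partial>M) = (\<integral>s. Fr w s \<partial>M)"
      unfolding Fr_def ..
    ultimately show "\<bar>(\<integral>s. (\<Sum>i\<in>UNIV. regret V g p w i (fst s) (fst (snd s)) (snd (snd s))) \<partial>M)
                - (\<Sum>i\<in>UNIV. (1 / real L) * (\<Sum>l<L. regret V g p w i (fst (S l)) (fst (snd (S l))) (snd (snd (S l)))))\<bar> \<le> \<epsilon>"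
      using R1 R2 R3 by linarith
  qed
qed

end
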